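(* Let $C_n=\frac1{n+1}\binom{2n}n$ be the $n$-th Catalan number. Then, as Laurent series in $z$, $$\sum_{n\ge0}C_nz^n=-13z^{-1}-3\left(4+2z^{-1}\right)\Psi(-z)+\left(-8z-14+4z^{-1}\right)\Psi^3(-z)+3\left(z^2-6z+9-4z^{-1}\right)\Psi^5(-z)\quad\text{modulo }27.$$
   Context: $\Psi(z)=\prod_{j\ge0}(1+z^{3^j})$, so $\Psi(-z)=\prod_{j\ge0}(1-z^{3^j})$. "Modulo $27$" means coefficientwise congruence of Laurent series in $z$. *)

theory Defs
  imports "HOL-Computational_Algebra.Computational_Algebra" "HOL-Number_Theory.Cong"
begin

text \<open>Psi(-z) = prod_{j>=0} (1 - z^(3^j)) as an integer power series. The coefficient of
  z^n of the infinite product equals that of the finite product over j < n+1, since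
  every factor with 3^j > n is 1 modulo z^(n+1).\<close>
definition Psi_neg :: "int fps" where
  "Psi_neg = Abs_fps (\<lambda>n. fps_nth (\<Prod>j<Suc n. (1 - fps_X ^ (3 ^ j))) n)"

definition catalan :: "nat \<Rightarrow> int" where
  "catalan n = int ((2 * n choose n) div (n + 1))"

definition catalan_gf :: "int fls" where
  "catalan_gf = fps_to_fls (Abs_fps catalan)"

end

theory Submission
  imports Defs
begin


definition Qs :: "int fps" where "Qs = - 13 - 3 * (4 * fps_X + 2) * Psi_neg + (- 8 * fps_X^2 - 14 * fps_X + 4) * Psi_neg^3 + 3 * (fps_X^3 - 6*fps_X^2 + 9*fps_X - 4) * Psi_neg^5"

lemma expr_eq: "(- 13 * fls_X_inv
        - 3 * (4 + 2 * fls_X_inv) * fps_to_fls Psi_neg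
        + (- 8 * fls_X - 14 + 4 * fls_X_inv) * (fps_to_fls Psi_neg) ^ 3
        + 3 * (fls_X ^ 2 - 6 * fls_X + 9 - 4 * fls_X_inv) * (fps_to_fls Psi_neg) ^ 5 :: int fls)
   = fls_X_inv * fps_to_fls Qs"
proof -
  have h: "fls_X_inv * fls_X = (1::int fls)" by (simp add: fls_X_inv_times_conv_shift)
  have q: "fps_to_fls Qs = - 13 - 3 * (4 * fls_X + 2) * fps_to_fls Psi_neg + (- 8 * fls_X^2 - 14 * fls_X + 4) * (fps_to_fls Psi_neg)^3 + 3 * (fls_X^3 - 6*fls_X^2 + 9*fls_X - 4) * (fps_to_fls Psi_neg)^5"
    by (simp add: Qs_def fls_times_fps_to_fls fps_to_fls_power)
  show ?thesis unfolding q using h by algebra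
qed
lemma core_alg:
  fixes z p t :: "int fps"
  assumes hyp: "(1 - z) * p^2 = 1 + 3 * t"
  defines "h \<equiv> - 3 * (4 * z + 2) + (- 8 * z^2 - 14 * z + 4) * p^2 + 3 * (z^3 - 6*z^2 + 9*z - 4) * p^4"
  defines "Q \<equiv> - 13 - 3 * (4 * z + 2) * p + (- 8 * z^2 - 14 * z + 4) * p^3 + 3 * (z^3 - 6*z^2 + 9*z - 4) * p^5"
  defines "K \<equiv> - 3 * (4 * z + 2) * (1-z)^2 + (- 8 * z^2 - 14 * z + 4) * (1 - z) * (1 + 3*t) + 3 * (z^3 - 6*z^2 + 9*z - 4) * (1 + 3*t)^2"
  shows "(1 - z)^5 * (Q^2 - Q + z) = 27 * ((1-z)^5 * (7 - p * h) + (7 + 84 * t + 432 * t^2 + 1216 * t^3 + 1872 * t^4 + 1296 * t^5 - 8 * z - 180 * z * t - 1260 * z * t^2 - 4356 * z * t^3 - 7776 * z * t^4 - 5832 * z * t^5 - 6 * z^2 + 129 * z^2 * t + 1530 * z^2 * t^2 + 6726 * z^2 * t^3 + 13635 * z^2 * t^4 + 10449 * z^2 * t^5 + 8 * z^3 - 36 * z^3 * t - 1080 * z^3 * t^2 - 6152 * z^3 * t^3 - 13248 * z^3 * t^4 - 9396 * z^3 * t^5 - 1 * z^4 - 18 * z^4 * t + 504 * z^4 * t^2 + 3744 * z^4 * t^3 + 7614 * z^4 * t^4 + 4374 * z^4 * t^5 + 24 * z^5 * t - 180 * z^5 * t^2 - 1452 * z^5 * t^3 - 2376 * z^5 * t^4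 - 972 * z^5 * t^5 - 3 * z^6 * t + 54 * z^6 * t^2 + 274 * z^6 * t^3 + 279 * z^6 * t^4 + 81 * z^6 * t^5))"
proof -
  have a: "Q = - 13 + p * h" unfolding Q_def h_def by algebra
  have b0: "(1-z)^2 * h = - 3 * (4 * z + 2) * (1-z)^2 + (- 8 * z^2 - 14 * z + 4) * (1 - z) * ((1-z)*p^2) + 3 * (z^3 - 6*z^2 + 9*z - 4) * ((1-z)*p^2)^2"
    unfolding h_def by algebra
  have b: "(1-z)^2 * h = K" unfolding b0 hyp K_def ..
  have c: "(1 - z)^5 * (Q^2 - Q + z) = 27 * ((1-z)^5 * (7 - p * h)) + ((1-z)*p^2) * ((1-z)^2 * h)^2 + (z - 7) * (1-z)^5"
    unfolding a by algebra
  have d: "(1 + 3*t) * K^2 + (z - 7) * (1-z)^5 = 27 * (7 + 84 * t + 432 * t^2 + 1216 * t^3 + 1872 * t^4 + 1296 * t^5 - 8 * z - 180 * z * t - 1260 * z * t^2 - 4356 * z * t^3 - 7776 * z * t^4 - 5832 * z * t^5 - 6 * z^2 + 129 * z^2 * t + 1530 * z^2 * t^2 + 6726 * z^2 * t^3 + 13635 * z^2 * t^4 + 10449 * z^2 * t^5 + 8 * z^3 - 36 * z^3 * t - 1080 * z^3 * t^2 - 6152 * z^3 * t^3 - 13248 * z^3 * t^4 - 9396 * z^3 * t^5 - 1 * z^4 - 18 * z^4 * t + 504 * z^4 * t^2 + 3744 * z^4 * t^3 + 7614 * z^4 * t^4 + 4374 * z^4 * t^5 + 24 * z^5 * t - 180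 * z^5 * t^2 - 1452 * z^5 * t^3 - 2376 * z^5 * t^4 - 972 * z^5 * t^5 - 3 * z^6 * t + 54 * z^6 * t^2 + 274 * z^6 * t^3 + 279 * z^6 * t^4 + 81 * z^6 * t^5)"
    unfolding K_def by algebra
  show ?thesis unfolding c b hyp using d by (simp add: algebra_simps)
qed

definition mdvd :: "int \<Rightarrow> int fps \<Rightarrow> bool" where "mdvd m f \<longleftrightarrow> (\<forall>n. m dvd f $ n)"

lemma mdvd_add: "mdvd m f \<Longrightarrow> mdvd m g \<Longrightarrow> mdvd m (f + g)" by (simp add: mdvd_def)
lemma mdvd_mult: "mdvd m f \<Longrightarrow> mdvd m (g * f)"
  unfolding mdvd_def fps_mult_nth by (auto intro!: dvd_sum dvd_mult)
lemma mdvd_numeral: "mdvd (numeral k) (numeral k * g)" by (simp add: mdvd_def fps_numeral_fps_const)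
lemma mdvd_ex: "mdvd m f \<Longrightarrow> \<exists>g. f = fps_const m * g"
  by (rule exI[of _ "Abs_fps (\<lambda>n. f$n div m)"]) (auto simp: mdvd_def fps_eq_iff)

lemma mdvd_cancel: assumes "g $ 0 = 1" "mdvd m (f * g)" shows "mdvd m f"
  unfolding mdvd_def
proof
  fix n show "m dvd f $ n"
  proof (induction n rule: less_induct)
    case (less n)
    have "(f * g) $ n = (\<Sum>i=0..n. f$i * g$(n-i))" by (rule fps_mult_nth)
    also have "\<dots> = (\<Sum>i<n. f$i * g$(n-i)) + f$n * g$0"
      by (simp add: atLeast0AtMost flip: lessThan_Suc_atMost)
    finally have e: "f$n = (f*g)$n - (\<Sum>i<n. f$i * g$(n-i))" using assms(1) by simp
    have "m dvd (\<Sum>i<n. f$i * g$(n-i))" using less by (auto intro!: dvd_sum)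
    moreover have "m dvd (f*g)$n" using assms(2) by (simp add: mdvd_def)
    ultimately show ?case unfolding e by (simp add: dvd_diff)
  qed
qed

definition Phi :: "nat \<Rightarrow> int fps" where "Phi N = (\<Prod>j<N. (1 - fps_X ^ (3 ^ j)))"
definition Tt :: "nat \<Rightarrow> int fps" where "Tt N = (\<Prod>j<N. (1 - fps_X ^ (3 ^ Suc j)))"

lemma Phi_Suc: "Phi (Suc N) = Phi N * (1 - fps_X ^ (3^N))" by (simp add: Phi_def)
lemma X3: "(fps_X ^ (3 ^ Suc N) :: int fps) = (fps_X ^ (3^N))^3"
  by (simp add: power_mult[symmetric] mult.commute)
lemma Tt_Suc: "Tt (Suc N) = Tt N * (1 - (fps_X ^ (3^N))^3)" unfolding Tt_def prod.lessThan_Suc X3 ..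
lemma Phi_0: "Phi N $ 0 = 1" by (induction N) (simp_all add: Phi_def)
lemma Phi_Suc_shift: "Phi (Suc N) = (1 - fps_X) * Tt N"
  unfolding Phi_def Tt_def prod.lessThan_Suc_shift by simp

lemma frob: "\<exists>A. Phi N ^ 3 = Tt N + 3 * A"
proof (induction N)
  case 0 show ?case by (rule exI[of _ 0]) (simp add: Phi_def Tt_def)
next
  case (Suc N)
  then obtain A where A: "Phi N ^ 3 = Tt N + 3 * A" by blast
  define x where "x = (fps_X ^ (3^N) :: int fps)"
  have "Phi (Suc N) ^ 3 = Tt (Suc N) + 3 * (A * (1 - x)^3 + Tt N * (x^2 - x))"
  proof -
    have "Phi (Suc N)^3 = Phi N ^3 * (1-x)^3" by (simp add: Phi_Suc x_def power_mult_distrib)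
    also have "\<dots> = (Tt N + 3*A) * (1-x)^3" by (simp add: A)
    also have "\<dots> = Tt N * (1 - x^3) + 3 * (A * (1 - x)^3 + Tt N * (x^2 - x))" by algebra
    also have "Tt N * (1 - x^3) = Tt (Suc N)" by (simp add: Tt_Suc x_def)
    finally show ?thesis .
  qed
  then show ?case by blast
qed

lemma rel3: "mdvd 3 ((1 - fps_X) * Phi N ^ 2 - 1 + fps_X ^ (3^N))"
proof -
  obtain A where A: "Phi N ^ 3 = Tt N + 3 * A" using frob by blast
  have "((1 - fps_X) * Phi N ^ 2 - 1 + fps_X ^ (3^N)) * Phi N = (1 - fps_X) * Phi N ^3 - Phi (Suc N)"
    unfolding Phi_Suc by algebra
  also have "\<dots> = 3 * ((1 - fps_X) * A)" unfolding A Phi_Suc_shift by algebra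
  finally have "mdvd 3 (((1 - fps_X) * Phi N ^ 2 - 1 + fps_X ^ (3^N)) * Phi N)"
    by (simp add: mdvd_numeral)
  then show ?thesis by (rule mdvd_cancel[OF Phi_0])
qed

lemma Phi_stable: "k < 3^N \<Longrightarrow> Phi (N + d) $ k = Phi N $ k"
proof (induction d)
  case 0 thus ?case by simp
next
  case (Suc d)
  have "3^N \<le> (3::nat)^(N+d)" by (rule power_increasing) auto
  hence "k < 3^(N+d)" using Suc.prems by linarith
  hence "Phi (N + Suc d) $ k = Phi (N+d) $ k"
    by (simp add: Phi_Suc algebra_simps fps_X_power_mult_right_nth)
  thus ?case using Suc by simp
qed

lemma k_lt: "k < (3::nat) ^ Suc k"
proof -
  have "k < 2^k" by (rule less_exp)
  also have "(2::nat)^k \<le> 3^k" by (rule power_mono) auto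
  also have "(3::nat)^k \<le> 3^Suc k" by simp
  finally show ?thesis .
qed

lemma Psi_Phi: "Psi_neg $ k = Phi (Suc k) $ k" by (simp add: Psi_neg_def Phi_def)

lemma Psi_nth: assumes "k < 3^N" shows "Psi_neg $ k = Phi N $ k"
proof -
  let ?M = "max N (Suc k)"
  have "Phi (N + (?M - N)) $ k = Phi N $ k" using Phi_stable[OF assms] by blast
  moreover have "Phi (Suc k + (?M - Suc k)) $ k = Phi (Suc k) $ k" using Phi_stable[OF k_lt] by blast
  ultimately show ?thesis by (simp add: Psi_Phi)
qed

definition agree :: "nat \<Rightarrow> int fps \<Rightarrow> int fps \<Rightarrow> bool" where
  "agree k f g \<longleftrightarrow> (\<forall>i\<le>k. f$i = g$i)"
lemma agree_mult: "agree k f g \<Longrightarrow> agree k (f*h) (g*h)"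
  unfolding agree_def fps_mult_nth by (auto intro!: sum.cong)
lemma agree_mult2: assumes "agree k f g" "agree k f' g'" shows "agree k (f*f') (g*g')"
proof -
  have "agree k (f*f') (g*f')" using agree_mult[OF assms(1)] .
  moreover have "agree k (f'*g) (g'*g)" using agree_mult[OF assms(2)] .
  ultimately show ?thesis by (simp add: agree_def mult.commute)
qed

lemma Psi_rel: "mdvd 3 ((1 - fps_X) * Psi_neg ^ 2 - 1)"
  unfolding mdvd_def
proof
  fix k
  have ag: "agree k Psi_neg (Phi (Suc k))" unfolding agree_def
  proof (intro allI impI)
    fix i assume "i \<le> k"
    hence "i < 3 ^ Suc k" using k_lt[of k] by linarith
    thus "Psi_neg $ i = Phi (Suc k) $ i" by (rule Psi_nth)
  qed
  have ag1: "agree k (1 - fps_X) (1 - fps_X)" by (simp add: agree_def)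
  have "agree k ((1 - fps_X) * (Psi_neg * Psi_neg)) ((1 - fps_X) * (Phi (Suc k) * Phi (Suc k)))"
    by (intro agree_mult2 ag ag1)
  hence e: "((1 - fps_X) * Psi_neg ^ 2 - 1) $ k = ((1 - fps_X) * Phi (Suc k) ^ 2 - 1) $ k"
    by (simp add: agree_def power2_eq_square)
  have "3 dvd ((1 - fps_X) * Phi (Suc k) ^ 2 - 1 + fps_X ^ (3^Suc k)) $ k"
    using rel3 unfolding mdvd_def by blast
  moreover have "k \<noteq> 3 ^ Suc k" using k_lt[of k] by simp
  ultimately show "3 dvd ((1 - fps_X) * Psi_neg ^ 2 - 1) $ k" unfolding e by simp
qed

lemma Psi_t: "\<exists>t. (1 - fps_X) * Psi_neg ^ 2 = 1 + 3 * t"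
proof -
  obtain g where "(1 - fps_X) * Psi_neg ^ 2 - 1 = fps_const 3 * g" using mdvd_ex[OF Psi_rel] by blast
  hence "(1 - fps_X) * Psi_neg ^ 2 = 1 + 3 * g" by (simp add: fps_numeral_fps_const algebra_simps)
  thus ?thesis by blast
qed

lemma Qs_mdvd: "mdvd 27 (Qs^2 - Qs + fps_X)"
proof -
  obtain t where t: "(1 - fps_X) * Psi_neg^2 = 1 + 3 * t" using Psi_t by blast
  obtain G where "(1 - fps_X)^5 * (Qs^2 - Qs + fps_X) = 27 * G"
    using core_alg[OF t] unfolding Qs_def by blast
  hence e: "(Qs^2 - Qs + fps_X) * (1 - fps_X)^5 = 27 * G" by (metis mult.commute)
  have "mdvd 27 ((Qs^2 - Qs + fps_X) * (1 - fps_X)^5)" unfolding e by (rule mdvd_numeral)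
  thus ?thesis by (rule mdvd_cancel[rotated]) (simp add: fps_power_zeroth)
qed

lemma Psi_0: "Psi_neg $ 0 = 1" by (simp add: Psi_Phi Phi_0)
lemma Qs_0: "Qs $ 0 = - 27" by (simp add: Qs_def fps_power_zeroth Psi_0)

lemma central_ratio: "Suc n * (2 * Suc n choose Suc n) = 2 * (2*n+1) * (2*n choose n)"
proof -
  define X where "X = (Suc (2*n) choose n)"
  define B where "B = (2*n choose n)"
  have eq: "2 * Suc n = Suc (Suc (2*n))" by simp
  have a: "Suc n * (2 * Suc n choose Suc n) = Suc (Suc (2*n)) * X"
    unfolding eq X_def by (rule Suc_times_binomial)
  have b: "Suc (2*n) * B = (Suc (2*n) choose Suc n) * Suc n"
    unfolding B_def by (rule Suc_times_binomial_eq)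
  have c: "(Suc (2*n) choose Suc n) = X"
    unfolding X_def using binomial_symmetric[of "Suc n" "Suc (2*n)"] by simp
  have d: "Suc n * X = Suc (2*n) * B" using b c by (simp only: mult.commute)
  have "Suc n * (2 * Suc n choose Suc n) = 2 * (Suc n * X)" unfolding a by simp
  also have "\<dots> = 2 * (2*n+1) * B" unfolding d by simp
  finally show ?thesis unfolding B_def .
qed

lemma catalan_real: "real (Suc n) * real_of_int (catalan n) = real (2*n choose n)"
proof -
  have d: "Suc n dvd (2*n choose n)"
  proof (cases n)
    case 0 thus ?thesis by simp
  next
    case (Suc m)
    define B where "B = (2*n choose n)"
    define X where "X = (2*n choose Suc n)"
    have nm: "Suc (n+m) = 2*n" using Suc by simp
    have h: "Suc n * (Suc (n + m) choose Suc n) = Suc m * (Suc (n + m) choose n)"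
      by (rule Suc_times_binomial_add)
    have h2: "Suc n * X = n * B" using h unfolding nm X_def B_def Suc[symmetric] .
    have "B = Suc n * B - n * B" by simp
    also have "\<dots> = Suc n * (B - X)" using h2 by (simp add: diff_mult_distrib2)
    finally show ?thesis unfolding B_def by (metis dvd_triv_left)
  qed
  show ?thesis using real_of_nat_div[OF d] by (simp add: catalan_def)
qed

lemma gb_step: "of_nat (Suc k) * ((a::real) gchoose Suc k) = (a - of_nat k) * (a gchoose k)"
  using gbinomial_absorption[of k a] gbinomial_absorb_comp[of a k] by simp

lemma gb_half: "((- (1/2) :: real) gchoose n) = (- (1/4))^n * real (2*n choose n)"
proof (induction n)
  case 0 thus ?case by simp
next
  case (Suc n)
  define B where "B = real (2*n choose n)"
  define B' where "B' = real (2 * Suc n choose Suc n)"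
  have cr: "real (Suc n) * B' = 2 * (2 * real n + 1) * B"
  proof -
    have e: "real (Suc n) * B' = real 2 * real (2*n+1) * B"
      using arg_cong[where f=real, OF central_ratio[of n]] unfolding of_nat_mult B_def B'_def .
    thus ?thesis by simp
  qed
  have "real (Suc n) * ((- (1/2) :: real) gchoose Suc n) = (- (1/2) - real n) * ((- (1/2)) gchoose n)"
    using gb_step[of n "- (1/2)"] by simp
  also have "\<dots> = (- (1/2) - real n) * ((- (1/4))^n * B)" unfolding Suc B_def ..
  also have "\<dots> = (- (1/4))^(Suc n) * (2 * (2 * real n + 1) * B)" by (simp add: field_simps)
  also have "\<dots> = (- (1/4))^(Suc n) * (real (Suc n) * B')" unfolding cr ..
  also have "\<dots> = real (Suc n) * ((- (1/4))^(Suc n) * B')" by simp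
  finally have "real (Suc n) * ((- (1/2) :: real) gchoose Suc n) = real (Suc n) * ((- (1/4))^(Suc n) * B')" .
  hence "((- (1/2) :: real) gchoose Suc n) = (- (1/4))^(Suc n) * B'"
    by (metis mult_cancel_left of_nat_eq_0_iff nat.simps(3))
  thus ?case unfolding B'_def .
qed

definition sh :: "nat \<Rightarrow> real" where "sh k = ((1/2) gchoose k) * (-4)^k"

lemma sh_0: "sh 0 = 1" by (simp add: sh_def)
lemma sh_Suc: "sh (Suc n) = - 2 * real_of_int (catalan n)"
proof -
  have "real (Suc n) * ((1/2::real) gchoose Suc n) = 1/2 * ((1/2 - 1) gchoose n)"
    using gbinomial_absorption[of n "1/2::real"] by simp
  also have "(1/2 - 1 :: real) = - (1/2)" by simp
  finally have a: "real (Suc n) * ((1/2::real) gchoose Suc n) = 1/2 * ((- (1/4))^n * real (2*n choose n))"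
    by (simp only: gb_half)
  have "real (Suc n) * sh (Suc n) = real (Suc n) * ((1/2::real) gchoose Suc n) * (-4)^Suc n"
    by (simp add: sh_def)
  also have "\<dots> = 1/2 * ((- (1/4))^n * real (2*n choose n)) * (-4)^Suc n" by (simp only: a)
  also have "\<dots> = -2 * real (2*n choose n)"
  proof -
    have "(- (1/4)::real)^n * (-4)^n = 1" by (simp flip: power_mult_distrib)
    thus ?thesis by (simp add: field_simps)
  qed
  also have "\<dots> = real (Suc n) * (- 2 * real_of_int (catalan n))" by (simp flip: catalan_real)
  finally have X: "real (Suc n) * sh (Suc n) = real (Suc n) * (- 2 * real_of_int (catalan n))" .
  show ?thesis using X by (metis mult_cancel_left of_nat_eq_0_iff nat.simps(3))
qed

lemma sh_conv: "(\<Sum>k=0..m. sh k * sh (m - k)) = (1 gchoose m) * (-4)^m"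
proof -
  have "(\<Sum>k=0..m. sh k * sh (m - k)) = (\<Sum>k=0..m. ((1/2::real) gchoose k) * ((1/2) gchoose (m-k)) * (-4)^m)"
  proof (rule sum.cong)
    fix k assume "k \<in> {0..m}"
    hence "(-4::real)^k * (-4)^(m-k) = (-4)^m" by (simp flip: power_add)
    thus "sh k * sh (m - k) = ((1/2::real) gchoose k) * ((1/2) gchoose (m-k)) * (-4)^m"
      unfolding sh_def by (metis (no_types, lifting) mult.assoc mult.left_commute)
  qed simp
  also have "\<dots> = (\<Sum>k=0..m. ((1/2::real) gchoose k) * ((1/2) gchoose (m-k))) * (-4)^m"
    by (simp add: sum_distrib_right)
  also have "\<dots> = (1 gchoose m) * (-4)^m" by (simp add: gbinomial_Vandermonde)
  finally show ?thesis .
qed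

lemma catalan_rec: "catalan (Suc n) = (\<Sum>i=0..n. catalan i * catalan (n - i))"
proof -
  have z: "((1::real) gchoose (Suc (Suc n))) = 0"
    using binomial_gbinomial[of 1 "Suc (Suc n)", where 'a=real] by simp
  have "0 = (\<Sum>k=0..Suc (Suc n). sh k * sh (Suc (Suc n) - k))" using sh_conv[of "Suc (Suc n)"] z by simp
  also have "\<dots> = sh 0 * sh (Suc (Suc n)) + (\<Sum>i=0..Suc n. sh (Suc i) * sh (Suc n - i))"
    by (subst sum.atLeast0_atMost_Suc_shift) simp
  also have "(\<Sum>i=0..Suc n. sh (Suc i) * sh (Suc n - i)) = (\<Sum>i=0..n. sh (Suc i) * sh (Suc n - i)) + sh (Suc (Suc n)) * sh 0"
    by (simp only: sum.atLeast0_atMost_Suc diff_self_eq_0)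
  also have "(\<Sum>i=0..n. sh (Suc i) * sh (Suc n - i)) = (\<Sum>i=0..n. 4 * (real_of_int (catalan i) * real_of_int (catalan (n - i))))"
  proof (rule sum.cong)
    fix i assume "i \<in> {0..n}"
    hence "Suc n - i = Suc (n - i)" by auto
    thus "sh (Suc i) * sh (Suc n - i) = 4 * (real_of_int (catalan i) * real_of_int (catalan (n - i)))"
      by (simp add: sh_Suc)
  qed simp
  finally have "0 = - 4 * real_of_int (catalan (Suc n)) + 4 * (\<Sum>i=0..n. real_of_int (catalan i) * real_of_int (catalan (n - i)))"
    by (simp add: sh_0 sh_Suc sum_distrib_left)
  hence "real_of_int (catalan (Suc n)) = real_of_int (\<Sum>i=0..n. catalan i * catalan (n - i))" by simp
  thus ?thesis by (simp only: of_int_eq_iff)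
qed

definition Ac :: "int fps" where "Ac = Abs_fps catalan"

lemma Ac_eq: "Ac = 1 + fps_X * Ac^2"
proof (rule fps_ext)
  fix n show "Ac $ n = (1 + fps_X * Ac^2) $ n"
  proof (cases n)
    case 0 thus ?thesis by (simp add: Ac_def catalan_def)
  next
    case (Suc m)
    have "(1 + fps_X * Ac^2) $ n = (Ac * Ac) $ m" using Suc by (simp add: power2_eq_square)
    also have "\<dots> = Ac $ n" using Suc by (simp add: Ac_def catalan_rec fps_mult_nth)
    finally show ?thesis ..
  qed
qed

lemma W_mdvd: "mdvd 27 (fps_X * Ac - (Qs + 27))"
proof -
  define W where "W = fps_X * Ac"
  have W0: "W^2 - W + fps_X = 0"
  proof -
    have "W^2 - W + fps_X = fps_X * (fps_X * Ac^2 + 1 - Ac)" unfolding W_def by algebra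
    also have "fps_X * Ac^2 + 1 - Ac = 0" using Ac_eq by (simp add: algebra_simps)
    finally show ?thesis by simp
  qed
  have e: "(W - (Qs + 27)) * (1 - W - (Qs + 27)) = (Qs^2 - Qs + fps_X) + 27 * (2 * Qs + 26) - (W^2 - W + fps_X)"
    by algebra
  have "mdvd 27 ((Qs^2 - Qs + fps_X) + 27 * (2 * Qs + 26))" by (rule mdvd_add[OF Qs_mdvd mdvd_numeral])
  hence "mdvd 27 ((W - (Qs + 27)) * (1 - W - (Qs + 27)))"
    unfolding e W0 diff_zero .
  moreover have "(1 - W - (Qs + 27)) $ 0 = 1" by (simp add: W_def Qs_0)
  ultimately have "mdvd 27 (W - (Qs + 27))" by (rule mdvd_cancel[rotated])
  thus ?thesis unfolding W_def .
qed

theorem theorem13p2: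
  "\<forall>n::int. [fls_nth catalan_gf n =
     fls_nth (- 13 * fls_X_inv
        - 3 * (4 + 2 * fls_X_inv) * fps_to_fls Psi_neg
        + (- 8 * fls_X - 14 + 4 * fls_X_inv) * (fps_to_fls Psi_neg) ^ 3
        + 3 * (fls_X ^ 2 - 6 * fls_X + 9 - 4 * fls_X_inv) * (fps_to_fls Psi_neg) ^ 5) n] (mod 27)"
proof
  fix n :: int
  have r: "fls_nth (- 13 * fls_X_inv
        - 3 * (4 + 2 * fls_X_inv) * fps_to_fls Psi_neg
        + (- 8 * fls_X - 14 + 4 * fls_X_inv) * (fps_to_fls Psi_neg) ^ 3
        + 3 * (fls_X ^ 2 - 6 * fls_X + 9 - 4 * fls_X_inv) * (fps_to_fls Psi_neg) ^ 5) n
      = (if n + 1 < 0 then 0 else Qs $ nat (n+1))"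
    unfolding expr_eq by (simp add: fls_X_inv_times_conv_shift)
  have l: "fls_nth catalan_gf n = (if n + 1 < 0 then 0 else (fps_X * Ac) $ nat (n+1))"
  proof (cases "n < 0")
    case True
    thus ?thesis by (simp add: catalan_gf_def)
  next
    case False
    hence "nat (n+1) = Suc (nat n)" by simp
    thus ?thesis using False by (simp add: catalan_gf_def Ac_def)
  qed
  show "[fls_nth catalan_gf n = fls_nth (- 13 * fls_X_inv
        - 3 * (4 + 2 * fls_X_inv) * fps_to_fls Psi_neg
        + (- 8 * fls_X - 14 + 4 * fls_X_inv) * (fps_to_fls Psi_neg) ^ 3
        + 3 * (fls_X ^ 2 - 6 * fls_X + 9 - 4 * fls_X_inv) * (fps_to_fls Psi_neg) ^ 5) n] (mod 27)"
    unfolding r l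
  proof (cases "n + 1 < 0")
    case True thus "[(if n + 1 < 0 then 0 else (fps_X * Ac) $ nat (n + 1)) = (if n + 1 < 0 then 0 else Qs $ nat (n + 1))] (mod 27)" by simp
  next
    case False
    define k where "k = nat (n+1)"
    have "27 dvd (fps_X * Ac - (Qs + 27)) $ k" using W_mdvd unfolding mdvd_def by blast
    moreover have "(fps_X * Ac - (Qs + 27)) $ k = (fps_X * Ac) $ k - (Qs $ k + (if k = 0 then 27 else 0))"
      by (simp only: fps_sub_nth fps_add_nth fps_numeral_nth)
    moreover have "\<And>a b::int. 27 dvd a - (b + (if k = 0 then 27 else 0)) \<Longrightarrow> 27 dvd a - b"
      by (cases "k = 0") presburger+
    ultimately have "27 dvd (fps_X * Ac) $ k - Qs $ k" by metis
    thus "[(if n + 1 < 0 then 0 else (fps_X * Ac) $ nat (n + 1)) = (if n + 1 < 0 then 0 else Qs $ nat (n + 1))] (mod 27)"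
      using False unfolding k_def by (simp add: cong_iff_dvd_diff)
  qed
qed

end
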